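(* Let $(\pi_1,\pi_2)$ be any (not necessarily chainable) architecture of depth $2$, i.e. patterns $\pi_i=(a_i,b_i,c_i,d_i)$ with $a_1c_1d_1=a_2b_2d_2$. Then the rank-one contribution supports $\mathbf{U}_i=\mathbf{S}_{\pi_1}[:,i]\mathbf{S}_{\pi_2}[i,:]$, $1\le i\le a_1c_1d_1$, are pairwise either disjoint (in support) or identical. Consequently, for every complex matrix $\mathbf{A}$ of size $a_1b_1d_1\times a_2c_2d_2$, the TwoFactor procedure with input $(\mathbf{A},\mathbf{S}_{\pi_1},\mathbf{S}_{\pi_2})$ returns an optimal solution of $$\inf_{\mathbf{X}\in\Sigma^{\pi_1},\mathbf{Y}\in\Sigma^{\pi_2}}\|\mathbf{A}-\mathbf{X}\mathbf{Y}\|_F^2.$$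
   Context: A pattern is a tuple $\pi=(a,b,c,d)$ of positive integers; $\mathbf{S}_\pi:=\mathbf{I}_a\otimes\mathbf{1}_{b\times c}\otimes\mathbf{I}_d\in\{0,1\}^{abd\times acd}$. A $\pi$-factor is a complex $abd\times acd$ matrix with support contained in that of $\mathbf{S}_\pi$; $\Sigma^\pi$ is the set of $\pi$-factors. For binary $\mathbf{L}\in\{0,1\}^{m\times r},\mathbf{R}\in\{0,1\}^{r\times n}$, let $\mathbf{U}_i:=\mathbf{L}[:,i]\mathbf{R}[i,:]$, let $\mathcal{P}(\mathbf{L},\mathbf{R})$ be the partition of $\{1,\dots,r\}$ into classes of $i\sim j\iff\mathbf{U}_i=\mathbf{U}_j$, and for a class $P$ let $R_P\times C_P$ be the support of $\mathbf{U}_i$, $i\in P$. TwoFactor$(\mathbf{A},\mathbf{L},\mathbf{R})$: set $\mathbf{X}=\mathbf{0}_{m\times r},\mathbf{Y}=\mathbf{0}_{r\times n}$; for each $P\in\mathcal{P}(\mathbf{L},\mathbf{R})$ set $(\mathbf{X}[R_P,P],\mathbf{Y}[P,C_P])$ to a pair $(\mathbf{H},\mathbf{K})\in\mathbb{C}^{|R_P|\times|P|}\times\mathbb{C}^{|P|\times|C_P|}$ minimizing $\|\mathbf{A}[R_P,C_P]-\mathbf{H}\mathbf{K}\|_F$; return $(\mathbf{X},\mathbf{Y})$. *)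

theory Defs
  imports Complex_Main "Jordan_Normal_Form.Matrix"
begin

definition kron :: "'a::semiring_1 mat \<Rightarrow> 'a mat \<Rightarrow> 'a mat" where
  "kron A B = mat (dim_row A * dim_row B) (dim_col A * dim_col B)
     (\<lambda>(i,j). A $$ (i div dim_row B, j div dim_col B) * B $$ (i mod dim_row B, j mod dim_col B))"

definition ones_mat :: "nat \<Rightarrow> nat \<Rightarrow> 'a::semiring_1 mat" where
  "ones_mat b c = mat b c (\<lambda>_. 1)"

type_synonym pattern = "nat \<times> nat \<times> nat \<times> nat"

definition valid_pattern :: "pattern \<Rightarrow> bool" where
  "valid_pattern \<pi> = (case \<pi> of (a,b,c,d) \<Rightarrow> a > 0 \<and> b > 0 \<and> c > 0 \<and> d > 0)"

definition S_pat :: "pattern \<Rightarrow> complex mat" where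
  "S_pat \<pi> = (case \<pi> of (a,b,c,d) \<Rightarrow> kron (kron (1\<^sub>m a) (ones_mat b c)) (1\<^sub>m d))"

definition factors :: "pattern \<Rightarrow> complex mat set" (\<open>\<Sigma>\<close>) where
  "factors \<pi> = (case \<pi> of (a,b,c,d) \<Rightarrow>
     {X. X \<in> carrier_mat (a*b*d) (a*c*d) \<and>
         (\<forall>i<a*b*d. \<forall>j<a*c*d. X $$ (i,j) \<noteq> 0 \<longrightarrow> S_pat \<pi> $$ (i,j) \<noteq> 0)})"

definition frob_norm :: "complex mat \<Rightarrow> real" where
  "frob_norm M = sqrt (\<Sum>i<dim_row M. \<Sum>j<dim_col M. (cmod (M $$ (i,j)))\<^sup>2)"

definition U_mat :: "complex mat \<Rightarrow> complex mat \<Rightarrow> nat \<Rightarrow> complex mat" where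
  "U_mat L R i = mat (dim_row L) (dim_col R) (\<lambda>(p,q). L $$ (p,i) * R $$ (i,q))"

definition supp :: "complex mat \<Rightarrow> (nat \<times> nat) set" where
  "supp M = {(p,q). p < dim_row M \<and> q < dim_col M \<and> M $$ (p,q) \<noteq> 0}"

definition cls :: "complex mat \<Rightarrow> complex mat \<Rightarrow> nat \<Rightarrow> nat set" where
  "cls L R i = {j. j < dim_col L \<and> U_mat L R j = U_mat L R i}"

definition rows_cls :: "complex mat \<Rightarrow> complex mat \<Rightarrow> nat \<Rightarrow> nat set" where
  "rows_cls L R i = fst ` supp (U_mat L R i)"

definition cols_cls :: "complex mat \<Rightarrow> complex mat \<Rightarrow> nat \<Rightarrow> nat set" where
  "cols_cls L R i = snd ` supp (U_mat L R i)"

definition block_err :: "complex mat \<Rightarrow> nat set \<Rightarrow> nat set \<Rightarrow> nat set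
    \<Rightarrow> (nat \<Rightarrow> nat \<Rightarrow> complex) \<Rightarrow> (nat \<Rightarrow> nat \<Rightarrow> complex) \<Rightarrow> real" where
  "block_err A Rs P Cs H K =
     (\<Sum>p\<in>Rs. \<Sum>q\<in>Cs. (cmod (A $$ (p,q) - (\<Sum>j\<in>P. H p j * K j q)))\<^sup>2)"

(* (X,Y) is a possible output of TwoFactor(A,L,R): X,Y vanish outside the blocks
   X[R_P,P], Y[P,C_P], and on each class P the pair (X[R_P,P], Y[P,C_P]) minimizes
   ||A[R_P,C_P] - H K||_F over all H, K. *)
definition TwoFactor_output :: "complex mat \<Rightarrow> complex mat \<Rightarrow> complex mat
    \<Rightarrow> complex mat \<Rightarrow> complex mat \<Rightarrow> bool" where
  "TwoFactor_output A L R X Y \<longleftrightarrow>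
     (let m = dim_row L; r = dim_col L; n = dim_col R in
      X \<in> carrier_mat m r \<and> Y \<in> carrier_mat r n \<and>
      (\<forall>p<m. \<forall>j<r. p \<notin> rows_cls L R j \<longrightarrow> X $$ (p,j) = 0) \<and>
      (\<forall>j<r. \<forall>q<n. q \<notin> cols_cls L R j \<longrightarrow> Y $$ (j,q) = 0) \<and>
      (\<forall>i<r. \<forall>H K. block_err A (rows_cls L R i) (cls L R i) (cols_cls L R i)
                       (\<lambda>p j. X $$ (p,j)) (\<lambda>j q. Y $$ (j,q))
                   \<le> block_err A (rows_cls L R i) (cls L R i) (cols_cls L R i) H K))"

end

theory Submission
  imports Defs
begin


lemma dims_S: "dim_row (S_pat (a,b,c,d)) = a*b*d" "dim_col (S_pat (a,b,c,d)) = a*c*d"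
  by (simp_all add: S_pat_def kron_def ones_mat_def)

lemma S_entry:
  assumes "p < a*b*d" "i < a*c*d"
  shows "S_pat (a,b,c,d) $$ (p,i) = (if (p div d div b, p mod d) = (i div d div c, i mod d) then 1 else 0)"
proof -
  have d: "d > 0" using assms by (cases d) auto
  have b: "b > 0" "c > 0" using assms by (cases b; cases c; auto)+
  have p1: "p div d < a*b" using assms d by (simp add: less_mult_imp_div_less)
  have i1: "i div d < a*c" using assms d by (simp add: less_mult_imp_div_less)
  have p2: "p div d div b < a" using p1 b by (metis less_mult_imp_div_less mult.commute)
  have i2: "i div d div c < a" using i1 b by (metis less_mult_imp_div_less mult.commute)
  show ?thesis using assms d b p1 i1 p2 i2
    by (simp add: S_pat_def kron_def ones_mat_def mult.commute)
qed


lemma supp_U: "supp (U_mat L R j) = {p. p < dim_row L \<and> L $$ (p,j) \<noteq> 0} \<times> {q. q < dim_col R \<and> R $$ (j,q) \<noteq> 0}"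
  by (auto simp: supp_def U_mat_def)

lemma prod_img: "S = P \<times> Q \<Longrightarrow> fst ` S \<times> snd ` S = S"
  by (simp add: fst_image_times snd_image_times)

lemma rc_supp: "rows_cls L R j \<times> cols_cls L R j = supp (U_mat L R j)"
  unfolding rows_cls_def cols_cls_def using prod_img[OF supp_U] .

lemma prod_entry:
  assumes "X \<in> carrier_mat m r" "Y \<in> carrier_mat r n" "p < m" "q < n"
  shows "(X * Y) $$ (p,q) = (\<Sum>j<r. X $$ (p,j) * Y $$ (j,q))"
  using assms by (auto simp: scalar_prod_def lessThan_atLeast0 intro!: sum.cong)

lemma frob_sq:
  assumes "M \<in> carrier_mat m n"
  shows "(frob_norm M)\<^sup>2 = (\<Sum>x\<in>{..<m} \<times> {..<n}. (cmod (M $$ x))\<^sup>2)"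
  using assms by (simp add: frob_norm_def sum_nonneg sum.cartesian_product)

lemma main_ineq:
  fixes L R A X Y X' Y' :: "complex mat"
  assumes L: "L \<in> carrier_mat m r" and R: "R \<in> carrier_mat r n" and A: "A \<in> carrier_mat m n"
  and X: "X \<in> carrier_mat m r" and Y: "Y \<in> carrier_mat r n"
  and X': "X' \<in> carrier_mat m r" and Y': "Y' \<in> carrier_mat r n"
  and disj: "\<forall>i<r. \<forall>j<r. U_mat L R i = U_mat L R j \<or> supp (U_mat L R i) \<inter> supp (U_mat L R j) = {}"
  and good: "\<forall>p<m. \<forall>j<r. \<forall>q<n. X $$ (p,j) * Y $$ (j,q) \<noteq> 0 \<longrightarrow> (p,q) \<in> supp (U_mat L R j)"
  and good': "\<forall>p<m. \<forall>j<r. \<forall>q<n. X' $$ (p,j) * Y' $$ (j,q) \<noteq> 0 \<longrightarrow> (p,q) \<in> supp (U_mat L R j)"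
  and opt: "\<forall>i<r. \<forall>H K. block_err A (rows_cls L R i) (cls L R i) (cols_cls L R i)
                       (\<lambda>p j. X $$ (p,j)) (\<lambda>j q. Y $$ (j,q))
                   \<le> block_err A (rows_cls L R i) (cls L R i) (cols_cls L R i) H K"
  shows "(frob_norm (A - X * Y))\<^sup>2 \<le> (frob_norm (A - X' * Y'))\<^sup>2"
proof -
  define U where "U = U_mat L R"
  define I where "I = {..<m} \<times> {..<n}"
  define Bs where "Bs = (\<lambda>i. supp (U i)) ` {..<r}"
  define f where "f = (\<lambda>x. (cmod (A $$ x - (\<Sum>j<r. X $$ (fst x,j) * Y $$ (j,snd x))))\<^sup>2)"
  define g where "g = (\<lambda>x. (cmod (A $$ x - (\<Sum>j<r. X' $$ (fst x,j) * Y' $$ (j,snd x))))\<^sup>2)"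
  have dU: "dim_row (U i) = m" "dim_col (U i) = n" for i using L R by (auto simp: U_def U_mat_def)
  have BsI: "\<Union>Bs \<subseteq> I" using dU by (auto simp: Bs_def I_def supp_def)
  have finI: "finite I" by (simp add: I_def)
  have lhs: "(frob_norm (A - X * Y))\<^sup>2 = sum f I"
    unfolding frob_sq[OF minus_carrier_mat[OF mult_carrier_mat[OF X Y]]] I_def f_def
    using A X Y by (intro sum.cong) (auto simp: prod_entry[OF X Y] simp del: index_mult_mat(1))
  have rhs: "(frob_norm (A - X' * Y'))\<^sup>2 = sum g I"
    unfolding frob_sq[OF minus_carrier_mat[OF mult_carrier_mat[OF X' Y']]] I_def g_def
    using A X' Y' by (intro sum.cong) (auto simp: prod_entry[OF X' Y'] simp del: index_mult_mat(1))
  have split: "sum h I = sum h (I - \<Union>Bs) + sum (sum h) Bs" for h :: "nat \<times> nat \<Rightarrow> real"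
  proof -
    have "sum h I = sum h (I - \<Union>Bs) + sum h (\<Union>Bs)"
      by (rule sum.subset_diff[OF BsI finI])
    also have "sum h (\<Union>Bs) = sum (sum h) Bs"
    proof -
      have "\<forall>A\<in>Bs. finite A" using BsI finI by (meson Sup_le_iff finite_subset)
      moreover have "\<forall>A\<in>Bs. \<forall>B\<in>Bs. A \<noteq> B \<longrightarrow> A \<inter> B = {}"
        using disj unfolding Bs_def U_def by fastforce
      ultimately show ?thesis using sum.Union_disjoint by (metis comp_apply)
    qed
    finally show ?thesis .
  qed
  have out: "f x = g x" if xI: "x \<in> I - \<Union>Bs" for x
  proof -
    obtain p q where x: "x = (p,q)" "p < m" "q < n" using xI by (auto simp: I_def)
    have nb: "(p,q) \<notin> supp (U j)" if "j < r" for j using that \<open>x \<in> I - \<Union>Bs\<close> x by (auto simp: Bs_def)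
    have "(\<Sum>j<r. X $$ (p,j) * Y $$ (j,q)) = 0" using good nb x unfolding U_def by (intro sum.neutral) (metis lessThan_iff)
    moreover have "(\<Sum>j<r. X' $$ (p,j) * Y' $$ (j,q)) = 0" using good' nb x unfolding U_def by (intro sum.neutral) (metis lessThan_iff)
    ultimately show ?thesis by (simp add: f_def g_def x)
  qed
  have blk: "sum f B \<le> sum g B" if "B \<in> Bs" for B
  proof -
    obtain i where i: "i < r" "B = supp (U i)" using \<open>B \<in> Bs\<close> by (auto simp: Bs_def)
    have clsr: "cls L R i \<subseteq> {..<r}" using L by (auto simp: cls_def)
    have red: "(\<Sum>j<r. Z $$ (p,j) * W $$ (j,q)) = (\<Sum>j\<in>cls L R i. Z $$ (p,j) * W $$ (j,q))"
      if gd: "\<forall>p<m. \<forall>j<r. \<forall>q<n. Z $$ (p,j) * W $$ (j,q) \<noteq> 0 \<longrightarrow> (p,q) \<in> supp (U_mat L R j)"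
        and pq: "(p,q) \<in> B" for Z W p q
    proof (rule sum.mono_neutral_right)
      show "finite {..<r}" by simp
      show "cls L R i \<subseteq> {..<r}" by (rule clsr)
      have pqm: "p < m" "q < n" using pq i dU by (auto simp: supp_def)
      show "\<forall>j\<in>{..<r} - cls L R i. Z $$ (p,j) * W $$ (j,q) = 0"
      proof
        fix j assume j: "j \<in> {..<r} - cls L R i"
        then have "U j \<noteq> U i" using L by (auto simp: cls_def U_def)
        then have "supp (U j) \<inter> supp (U i) = {}" using disj j i by (auto simp: U_def)
        then show "Z $$ (p,j) * W $$ (j,q) = 0" using gd pq i j pqm by (auto simp: U_def)
      qed
    qed
    have Beq: "B = rows_cls L R i \<times> cols_cls L R i" using i rc_supp by (simp add: U_def)
    have "sum f B = block_err A (rows_cls L R i) (cls L R i) (cols_cls L R i)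
                       (\<lambda>p j. X $$ (p,j)) (\<lambda>j q. Y $$ (j,q))"
      unfolding block_err_def sum.cartesian_product Beq[symmetric] f_def
      using red[OF good] by (intro sum.cong) auto
    also have "\<dots> \<le> block_err A (rows_cls L R i) (cls L R i) (cols_cls L R i)
                       (\<lambda>p j. X' $$ (p,j)) (\<lambda>j q. Y' $$ (j,q))"
      using opt i by blast
    also have "\<dots> = sum g B"
      unfolding block_err_def sum.cartesian_product Beq[symmetric] g_def
      using red[OF good'] by (intro sum.cong) auto
    finally show ?thesis .
  qed
  show ?thesis unfolding lhs rhs split
  proof (rule add_mono)
    show "sum f (I - \<Union>Bs) \<le> sum g (I - \<Union>Bs)" using out by (intro sum_mono) simp
    show "sum (sum f) Bs \<le> sum (sum g) Bs" using blk by (rule sum_mono)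
  qed
qed

theorem lemma5p1:
  fixes a1 b1 c1 d1 a2 b2 c2 d2 :: nat
  assumes "valid_pattern (a1,b1,c1,d1)" and "valid_pattern (a2,b2,c2,d2)"
    and "a1*c1*d1 = a2*b2*d2"
  shows "(\<forall>i<a1*c1*d1. \<forall>j<a1*c1*d1.
            U_mat (S_pat (a1,b1,c1,d1)) (S_pat (a2,b2,c2,d2)) i
              = U_mat (S_pat (a1,b1,c1,d1)) (S_pat (a2,b2,c2,d2)) j
          \<or> supp (U_mat (S_pat (a1,b1,c1,d1)) (S_pat (a2,b2,c2,d2)) i)
              \<inter> supp (U_mat (S_pat (a1,b1,c1,d1)) (S_pat (a2,b2,c2,d2)) j) = {})
     \<and> (\<forall>A X Y. A \<in> carrier_mat (a1*b1*d1) (a2*c2*d2) \<longrightarrow>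
          TwoFactor_output A (S_pat (a1,b1,c1,d1)) (S_pat (a2,b2,c2,d2)) X Y \<longrightarrow>
          X \<in> \<Sigma> (a1,b1,c1,d1) \<and> Y \<in> \<Sigma> (a2,b2,c2,d2) \<and>
          (\<forall>X' \<in> \<Sigma> (a1,b1,c1,d1). \<forall>Y' \<in> \<Sigma> (a2,b2,c2,d2).
             (frob_norm (A - X * Y))\<^sup>2 \<le> (frob_norm (A - X' * Y'))\<^sup>2))"
proof -
  let ?L = "S_pat (a1,b1,c1,d1)" and ?R = "S_pat (a2,b2,c2,d2)"
  define m where "m = a1*b1*d1"
  define r where "r = a1*c1*d1"
  define n where "n = a2*c2*d2"
  have L: "?L \<in> carrier_mat m r" using dims_S[of a1 b1 c1 d1] by (auto simp: m_def r_def)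
  have R: "?R \<in> carrier_mat r n" using dims_S[of a2 b2 c2 d2] assms(3) by (auto simp: n_def r_def)
  have Le: "?L $$ (p,i) = (if (p div d1 div b1, p mod d1) = (i div d1 div c1, i mod d1) then 1 else 0)"
    if "p < m" "i < r" for p i using S_entry that by (simp add: m_def r_def)
  have Re: "?R $$ (i,q) = (if (i div d2 div b2, i mod d2) = (q div d2 div c2, q mod d2) then 1 else 0)"
    if "i < r" "q < n" for i q using S_entry that assms(3) by (simp add: n_def r_def)
  have Ue: "U_mat ?L ?R i $$ (p,q) = ?L $$ (p,i) * ?R $$ (i,q)" if "p < m" "q < n" for i p q
    using that L R by (simp add: U_mat_def)
  have disj: "\<forall>i<r. \<forall>j<r. U_mat ?L ?R i = U_mat ?L ?R j \<or> supp (U_mat ?L ?R i) \<inter> supp (U_mat ?L ?R j) = {}"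
  proof (intro allI impI)
    fix i j assume i: "i < r" and j: "j < r"
    show "U_mat ?L ?R i = U_mat ?L ?R j \<or> supp (U_mat ?L ?R i) \<inter> supp (U_mat ?L ?R j) = {}"
    proof (cases "supp (U_mat ?L ?R i) \<inter> supp (U_mat ?L ?R j) = {}")
      case False
      then obtain p q where pq: "p < m" "q < n" "?L $$ (p,i) \<noteq> 0" "?R $$ (i,q) \<noteq> 0"
        "?L $$ (p,j) \<noteq> 0" "?R $$ (j,q) \<noteq> 0"
        using L R unfolding supp_U by auto
      have g1: "(i div d1 div c1, i mod d1) = (j div d1 div c1, j mod d1)"
        using pq Le i j by (metis (no_types, lifting))
      have f2: "(i div d2 div b2, i mod d2) = (j div d2 div b2, j mod d2)"
        using pq Re i j by (metis (no_types, lifting))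
      have "U_mat ?L ?R i = U_mat ?L ?R j"
      proof (rule eq_matI)
        fix p q assume "p < dim_row (U_mat ?L ?R j)" "q < dim_col (U_mat ?L ?R j)"
        then have pq': "p < m" "q < n" using L R by (auto simp: U_mat_def)
        show "U_mat ?L ?R i $$ (p,q) = U_mat ?L ?R j $$ (p,q)"
          unfolding Ue[OF pq'] Le[OF pq'(1) i] Le[OF pq'(1) j] Re[OF i pq'(2)] Re[OF j pq'(2)]
          using g1 f2 by simp
      qed (auto simp: U_mat_def)
      then show ?thesis by simp
    qed simp
  qed
  have part2: "X \<in> \<Sigma> (a1,b1,c1,d1) \<and> Y \<in> \<Sigma> (a2,b2,c2,d2) \<and>
          (\<forall>X' \<in> \<Sigma> (a1,b1,c1,d1). \<forall>Y' \<in> \<Sigma> (a2,b2,c2,d2).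
             (frob_norm (A - X * Y))\<^sup>2 \<le> (frob_norm (A - X' * Y'))\<^sup>2)"
    if A: "A \<in> carrier_mat (a1*b1*d1) (a2*c2*d2)"
      and T: "TwoFactor_output A ?L ?R X Y" for A X Y
  proof -
    have dL: "dim_row ?L = m" "dim_col ?L = r" "dim_col ?R = n" using L R by auto
    note T' = T[unfolded TwoFactor_output_def Let_def dL]
    have X: "X \<in> carrier_mat m r" and Y: "Y \<in> carrier_mat r n" using T' by auto
    have Xz: "\<forall>p<m. \<forall>j<r. p \<notin> rows_cls ?L ?R j \<longrightarrow> X $$ (p,j) = 0" using T' by blast
    have Yz: "\<forall>j<r. \<forall>q<n. q \<notin> cols_cls ?L ?R j \<longrightarrow> Y $$ (j,q) = 0" using T' by blast
    have opt: "\<forall>i<r. \<forall>H K. block_err A (rows_cls ?L ?R i) (cls ?L ?R i) (cols_cls ?L ?R i)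
                       (\<lambda>p j. X $$ (p,j)) (\<lambda>j q. Y $$ (j,q))
                   \<le> block_err A (rows_cls ?L ?R i) (cls ?L ?R i) (cols_cls ?L ?R i) H K"
      using T' by blast
    have rowsL: "?L $$ (p,j) \<noteq> 0" if "p \<in> rows_cls ?L ?R j" for p j
      using that unfolding rows_cls_def supp_U by (auto split: if_splits)
    have colsR: "?R $$ (j,q) \<noteq> 0" if "q \<in> cols_cls ?L ?R j" for q j
      using that unfolding cols_cls_def supp_U by (auto split: if_splits)
    have XS: "X \<in> \<Sigma> (a1,b1,c1,d1)"
      unfolding factors_def using X Xz rowsL by (auto simp: m_def r_def)
    have YS: "Y \<in> \<Sigma> (a2,b2,c2,d2)"
      unfolding factors_def using Y Yz colsR assms(3) by (auto simp: n_def r_def)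
    have good: "\<forall>p<m. \<forall>j<r. \<forall>q<n. X $$ (p,j) * Y $$ (j,q) \<noteq> 0 \<longrightarrow> (p,q) \<in> supp (U_mat ?L ?R j)"
    proof (intro allI impI)
      fix p j q assume "p < m" "j < r" "q < n" "X $$ (p,j) * Y $$ (j,q) \<noteq> 0"
      then have "p \<in> rows_cls ?L ?R j" "q \<in> cols_cls ?L ?R j" using Xz Yz by auto
      then show "(p,q) \<in> supp (U_mat ?L ?R j)" using rc_supp by blast
    qed
    have opt2: "(frob_norm (A - X * Y))\<^sup>2 \<le> (frob_norm (A - X' * Y'))\<^sup>2"
      if X': "X' \<in> \<Sigma> (a1,b1,c1,d1)" and Y': "Y' \<in> \<Sigma> (a2,b2,c2,d2)" for X' Y'
    proof -
      have X'c: "X' \<in> carrier_mat m r" and X'z: "\<forall>p<m. \<forall>j<r. X' $$ (p,j) \<noteq> 0 \<longrightarrow> ?L $$ (p,j) \<noteq> 0"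
        using X' unfolding factors_def by (auto simp: m_def r_def)
      have Y'c: "Y' \<in> carrier_mat r n" and Y'z: "\<forall>j<r. \<forall>q<n. Y' $$ (j,q) \<noteq> 0 \<longrightarrow> ?R $$ (j,q) \<noteq> 0"
        using Y' assms(3) unfolding factors_def by (auto simp: n_def r_def)
      have good': "\<forall>p<m. \<forall>j<r. \<forall>q<n. X' $$ (p,j) * Y' $$ (j,q) \<noteq> 0 \<longrightarrow> (p,q) \<in> supp (U_mat ?L ?R j)"
        using X'z Y'z L R unfolding supp_U by auto
      have Ac: "A \<in> carrier_mat m n" using A by (simp add: m_def n_def)
      show ?thesis by (rule main_ineq[OF L R Ac X Y X'c Y'c disj good good' opt])
    qed
    show ?thesis using XS YS opt2 by blast
  qed
  show ?thesis using disj part2 by (simp add: r_def)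
qed

end
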